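(* A category $\mathbf{C}$ is a Kleene-Kozen category if and only if (a) $\mathbf{C}$ is enriched over bounded join-semilattices and strict join-preserving maps, and (b) there is an operator $(\cdot)^\ast:\mathbf{C}(X,X)\to\mathbf{C}(X,X)$ for every object $X$ such that for all objects $X,Y$ and morphisms $f:X\to X$, $g:Y\to Y$, $h:X\to X$, $k:Y\to X$: 1. $f^\ast=\mathrm{id}\lor f^\ast\circ f$; 2. $\mathrm{id}^\ast=\mathrm{id}$; 3. $f^\ast=(f\lor\mathrm{id})^\ast$; 4. if $h\circ k=k\circ g$ then $h^\ast\circ k=k\circ g^\ast$.
   Context: A category $\mathbf{C}$ is enriched over bounded join-semilattices and strict join-preserving maps if each hom-set $\mathbf{C}(X,Y)$ is a join-semilattice $(\lor)$ with a least element $\bot$, and composition preserves binary joins and $\bot$ in each argument; the order is $f\le g\iff f\lor g=g$. A Kleene-Kozen category is such an enriched category together with an operator $(\cdot)^\ast:\mathbf{C}(X,X)\to\mathbf{C}(X,X)$ for every object $X$, such that for all $f:Y\to Y$, $g:Y\to Z$, $h:X\to Y$: $g\circ f^\ast$ is the least prefixpoint of $x\mapsto g\lor x\circ f$ on $\mathbf{C}(Y,Z)$, and $f^\ast\circ h$ is the least prefixpoint of $x\mapsto h\lor f\circ x$ on $\mathbf{C}(X,Y)$. *)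

theory Defs
  imports Main
begin

text \<open>A category presented by its object set, hom-sets, identities and an
object-indexed composition: Comp X Y Z g f is g \<circ> f for f : X \<rightarrow> Y, g : Y \<rightarrow> Z.\<close>

record ('o, 'm) category =
  Obj  :: "'o set"
  Hom  :: "'o \<Rightarrow> 'o \<Rightarrow> 'm set"
  Id   :: "'o \<Rightarrow> 'm"
  Comp :: "'o \<Rightarrow> 'o \<Rightarrow> 'o \<Rightarrow> 'm \<Rightarrow> 'm \<Rightarrow> 'm"

definition category :: "('o, 'm) category \<Rightarrow> bool" where
  "category C \<longleftrightarrow>
     (\<forall>X\<in>Obj C. Id C X \<in> Hom C X X) \<and>
     (\<forall>X\<in>Obj C. \<forall>Y\<in>Obj C. \<forall>Z\<in>Obj C. \<forall>f\<in>Hom C X Y. \<forall>g\<in>Hom C Y Z.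
        Comp C X Y Z g f \<in> Hom C X Z) \<and>
     (\<forall>X\<in>Obj C. \<forall>Y\<in>Obj C. \<forall>f\<in>Hom C X Y.
        Comp C X Y Y (Id C Y) f = f \<and> Comp C X X Y f (Id C X) = f) \<and>
     (\<forall>W\<in>Obj C. \<forall>X\<in>Obj C. \<forall>Y\<in>Obj C. \<forall>Z\<in>Obj C.
        \<forall>f\<in>Hom C W X. \<forall>g\<in>Hom C X Y. \<forall>h\<in>Hom C Y Z.
        Comp C W Y Z h (Comp C W X Y g f) = Comp C W X Z (Comp C X Y Z h g) f)"

definition enriched ::
  "('o, 'm) category \<Rightarrow> ('o \<Rightarrow> 'o \<Rightarrow> 'm \<Rightarrow> 'm \<Rightarrow> 'm) \<Rightarrow> ('o \<Rightarrow> 'o \<Rightarrow> 'm) \<Rightarrow> bool" where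
  "enriched C join bt \<longleftrightarrow>
     (\<forall>X\<in>Obj C. \<forall>Y\<in>Obj C.
        bt X Y \<in> Hom C X Y \<and>
        (\<forall>f\<in>Hom C X Y. \<forall>g\<in>Hom C X Y. join X Y f g \<in> Hom C X Y) \<and>
        (\<forall>f\<in>Hom C X Y. \<forall>g\<in>Hom C X Y. \<forall>h\<in>Hom C X Y.
           join X Y (join X Y f g) h = join X Y f (join X Y g h)) \<and>
        (\<forall>f\<in>Hom C X Y. \<forall>g\<in>Hom C X Y. join X Y f g = join X Y g f) \<and>
        (\<forall>f\<in>Hom C X Y. join X Y f f = f) \<and>
        (\<forall>f\<in>Hom C X Y. join X Y (bt X Y) f = f)) \<and>
     (\<forall>X\<in>Obj C. \<forall>Y\<in>Obj C. \<forall>Z\<in>Obj C.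
        (\<forall>f\<in>Hom C X Y. \<forall>f'\<in>Hom C X Y. \<forall>g\<in>Hom C Y Z.
           Comp C X Y Z g (join X Y f f') = join X Z (Comp C X Y Z g f) (Comp C X Y Z g f')) \<and>
        (\<forall>f\<in>Hom C X Y. \<forall>g\<in>Hom C Y Z. \<forall>g'\<in>Hom C Y Z.
           Comp C X Y Z (join Y Z g g') f = join X Z (Comp C X Y Z g f) (Comp C X Y Z g' f)) \<and>
        (\<forall>g\<in>Hom C Y Z. Comp C X Y Z g (bt X Y) = bt X Z) \<and>
        (\<forall>f\<in>Hom C X Y. Comp C X Y Z (bt Y Z) f = bt X Z))"

definition hom_le :: "('o \<Rightarrow> 'o \<Rightarrow> 'm \<Rightarrow> 'm \<Rightarrow> 'm) \<Rightarrow> 'o \<Rightarrow> 'o \<Rightarrow> 'm \<Rightarrow> 'm \<Rightarrow> bool" where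
  "hom_le join X Y f g \<longleftrightarrow> join X Y f g = g"

definition least_prefixpoint :: "'a set \<Rightarrow> ('a \<Rightarrow> 'a \<Rightarrow> bool) \<Rightarrow> ('a \<Rightarrow> 'a) \<Rightarrow> 'a \<Rightarrow> bool" where
  "least_prefixpoint S le F p \<longleftrightarrow>
     p \<in> S \<and> le (F p) p \<and> (\<forall>x\<in>S. le (F x) x \<longrightarrow> le p x)"

definition kk_star ::
  "('o, 'm) category \<Rightarrow> ('o \<Rightarrow> 'o \<Rightarrow> 'm \<Rightarrow> 'm \<Rightarrow> 'm) \<Rightarrow> ('o \<Rightarrow> 'm \<Rightarrow> 'm) \<Rightarrow> bool" where
  "kk_star C join star \<longleftrightarrow>
     (\<forall>X\<in>Obj C. \<forall>f\<in>Hom C X X. star X f \<in> Hom C X X) \<and>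
     (\<forall>Y\<in>Obj C. \<forall>Z\<in>Obj C. \<forall>f\<in>Hom C Y Y. \<forall>g\<in>Hom C Y Z.
        least_prefixpoint (Hom C Y Z) (hom_le join Y Z)
          (\<lambda>x. join Y Z g (Comp C Y Y Z x f)) (Comp C Y Y Z g (star Y f))) \<and>
     (\<forall>X\<in>Obj C. \<forall>Y\<in>Obj C. \<forall>f\<in>Hom C Y Y. \<forall>h\<in>Hom C X Y.
        least_prefixpoint (Hom C X Y) (hom_le join X Y)
          (\<lambda>x. join X Y h (Comp C X Y Y f x)) (Comp C X Y Y (star Y f) h))"

definition kleene_kozen_category :: "('o, 'm) category \<Rightarrow> bool" where
  "kleene_kozen_category C \<longleftrightarrow> category C \<and>
     (\<exists>join bt star. enriched C join bt \<and> kk_star C join star)"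

definition star_axioms ::
  "('o, 'm) category \<Rightarrow> ('o \<Rightarrow> 'o \<Rightarrow> 'm \<Rightarrow> 'm \<Rightarrow> 'm) \<Rightarrow> ('o \<Rightarrow> 'm \<Rightarrow> 'm) \<Rightarrow> bool" where
  "star_axioms C join star \<longleftrightarrow>
     (\<forall>X\<in>Obj C. \<forall>f\<in>Hom C X X. star X f \<in> Hom C X X) \<and>
     (\<forall>X\<in>Obj C. \<forall>Y\<in>Obj C. \<forall>f\<in>Hom C X X. \<forall>g\<in>Hom C Y Y. \<forall>h\<in>Hom C X X. \<forall>k\<in>Hom C Y X.
        star X f = join X X (Id C X) (Comp C X X X (star X f) f) \<and>
        star X (Id C X) = Id C X \<and>
        star X f = star X (join X X f (Id C X)) \<and>
        (Comp C Y X X h k = Comp C Y Y X k g \<longrightarrow>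
           Comp C Y X X (star X h) k = Comp C Y Y X k (star Y g)))"

end

theory Submission
  imports Defs
begin

locale enr =
  fixes C :: "('o, 'm) category" and join :: "'o \<Rightarrow> 'o \<Rightarrow> 'm \<Rightarrow> 'm \<Rightarrow> 'm" and bt
  assumes cat: "category C" and en: "enriched C join bt"
begin

abbreviation "c \<equiv> Comp C"
abbreviation "le \<equiv> hom_le join"

lemma id_hom[intro,simp]: "X \<in> Obj C \<Longrightarrow> Id C X \<in> Hom C X X"
  using cat unfolding category_def by blast
lemma comp_hom[intro,simp]: "X \<in> Obj C \<Longrightarrow> Y \<in> Obj C \<Longrightarrow> Z \<in> Obj C \<Longrightarrow> f \<in> Hom C X Y \<Longrightarrow> g \<in> Hom C Y Z \<Longrightarrow> c X Y Z g f \<in> Hom C X Z"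
  using cat unfolding category_def by blast
lemma id_l[simp]: "X \<in> Obj C \<Longrightarrow> Y \<in> Obj C \<Longrightarrow> f \<in> Hom C X Y \<Longrightarrow> c X Y Y (Id C Y) f = f"
  using cat unfolding category_def by blast
lemma id_r[simp]: "X \<in> Obj C \<Longrightarrow> Y \<in> Obj C \<Longrightarrow> f \<in> Hom C X Y \<Longrightarrow> c X X Y f (Id C X) = f"
  using cat unfolding category_def by blast
lemma assoc: "W \<in> Obj C \<Longrightarrow> X \<in> Obj C \<Longrightarrow> Y \<in> Obj C \<Longrightarrow> Z \<in> Obj C \<Longrightarrow> f \<in> Hom C W X \<Longrightarrow> g \<in> Hom C X Y \<Longrightarrow> h \<in> Hom C Y Z \<Longrightarrow>
   c W Y Z h (c W X Y g f) = c W X Z (c X Y Z h g) f"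
  using cat unfolding category_def by blast

lemma join_hom[intro,simp]: "X \<in> Obj C \<Longrightarrow> Y \<in> Obj C \<Longrightarrow> f \<in> Hom C X Y \<Longrightarrow> g \<in> Hom C X Y \<Longrightarrow> join X Y f g \<in> Hom C X Y"
  using en unfolding enriched_def by blast
lemma join_assoc: "X \<in> Obj C \<Longrightarrow> Y \<in> Obj C \<Longrightarrow> f \<in> Hom C X Y \<Longrightarrow> g \<in> Hom C X Y \<Longrightarrow> h \<in> Hom C X Y \<Longrightarrow> join X Y (join X Y f g) h = join X Y f (join X Y g h)"
  using en unfolding enriched_def by blast
lemma join_comm: "X \<in> Obj C \<Longrightarrow> Y \<in> Obj C \<Longrightarrow> f \<in> Hom C X Y \<Longrightarrow> g \<in> Hom C X Y \<Longrightarrow> join X Y f g = join X Y g f"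
  using en unfolding enriched_def by blast
lemma join_idem: "X \<in> Obj C \<Longrightarrow> Y \<in> Obj C \<Longrightarrow> f \<in> Hom C X Y \<Longrightarrow> join X Y f f = f"
  using en unfolding enriched_def by blast
lemma comp_join_r: assumes "X \<in> Obj C" "Y \<in> Obj C" "Z \<in> Obj C" "f \<in> Hom C X Y" "f' \<in> Hom C X Y" "g \<in> Hom C Y Z"
 shows  "c X Y Z g (join X Y f f') = join X Z (c X Y Z g f) (c X Y Z g f')"
proof -
  have "\<forall>X\<in>Obj C. \<forall>Y\<in>Obj C. \<forall>Z\<in>Obj C. (\<forall>f\<in>Hom C X Y. \<forall>f'\<in>Hom C X Y. \<forall>g\<in>Hom C Y Z.
           c X Y Z g (join X Y f f') = join X Z (c X Y Z g f) (c X Y Z g f'))"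
    using en unfolding enriched_def by (simp add: Ball_def)
  thus ?thesis using assms by blast
qed
lemma comp_join_l: assumes "X \<in> Obj C" "Y \<in> Obj C" "Z \<in> Obj C" "f \<in> Hom C X Y" "g \<in> Hom C Y Z" "g' \<in> Hom C Y Z"
 shows "c X Y Z (join Y Z g g') f = join X Z (c X Y Z g f) (c X Y Z g' f)"
proof -
  have "\<forall>X\<in>Obj C. \<forall>Y\<in>Obj C. \<forall>Z\<in>Obj C. (\<forall>f\<in>Hom C X Y. \<forall>g\<in>Hom C Y Z. \<forall>g'\<in>Hom C Y Z.
           c X Y Z (join Y Z g g') f = join X Z (c X Y Z g f) (c X Y Z g' f))"
    using en unfolding enriched_def by (simp add: Ball_def)
  thus ?thesis using assms by blast
qed

lemma le_refl: "X \<in> Obj C \<Longrightarrow> Y \<in> Obj C \<Longrightarrow> f \<in> Hom C X Y \<Longrightarrow> le X Y f f"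
  unfolding hom_le_def using join_idem by blast
lemma le_antisym: "X \<in> Obj C \<Longrightarrow> Y \<in> Obj C \<Longrightarrow> f \<in> Hom C X Y \<Longrightarrow> g \<in> Hom C X Y \<Longrightarrow> le X Y f g \<Longrightarrow> le X Y g f \<Longrightarrow> f = g"
  unfolding hom_le_def using join_comm by metis
lemma le_trans: "X \<in> Obj C \<Longrightarrow> Y \<in> Obj C \<Longrightarrow> f \<in> Hom C X Y \<Longrightarrow> g \<in> Hom C X Y \<Longrightarrow> h \<in> Hom C X Y \<Longrightarrow> le X Y f g \<Longrightarrow> le X Y g h \<Longrightarrow> le X Y f h"
  unfolding hom_le_def using join_assoc by metis
lemma le_join1: "X \<in> Obj C \<Longrightarrow> Y \<in> Obj C \<Longrightarrow> f \<in> Hom C X Y \<Longrightarrow> g \<in> Hom C X Y \<Longrightarrow> le X Y f (join X Y f g)"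
  unfolding hom_le_def using join_assoc join_idem by metis
lemma le_join2: "X \<in> Obj C \<Longrightarrow> Y \<in> Obj C \<Longrightarrow> f \<in> Hom C X Y \<Longrightarrow> g \<in> Hom C X Y \<Longrightarrow> le X Y g (join X Y f g)"
  using le_join1 join_comm by metis
lemma join_le: "X \<in> Obj C \<Longrightarrow> Y \<in> Obj C \<Longrightarrow> f \<in> Hom C X Y \<Longrightarrow> g \<in> Hom C X Y \<Longrightarrow> h \<in> Hom C X Y \<Longrightarrow> le X Y f h \<Longrightarrow> le X Y g h \<Longrightarrow> le X Y (join X Y f g) h"
  unfolding hom_le_def using join_assoc by metis
lemma join_mono: "X \<in> Obj C \<Longrightarrow> Y \<in> Obj C \<Longrightarrow> a \<in> Hom C X Y \<Longrightarrow> b \<in> Hom C X Y \<Longrightarrow> d \<in> Hom C X Y \<Longrightarrow> le X Y a b \<Longrightarrow> le X Y (join X Y d a) (join X Y d b)"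
  by (meson join_hom join_le le_join1 le_join2 le_trans)
lemma comp_mono_l: "X \<in> Obj C \<Longrightarrow> Y \<in> Obj C \<Longrightarrow> Z \<in> Obj C \<Longrightarrow> f \<in> Hom C X Y \<Longrightarrow> a \<in> Hom C Y Z \<Longrightarrow> b \<in> Hom C Y Z \<Longrightarrow> le Y Z a b \<Longrightarrow> le X Z (c X Y Z a f) (c X Y Z b f)"
  unfolding hom_le_def by (metis comp_join_l)
lemma comp_mono_r: "X \<in> Obj C \<Longrightarrow> Y \<in> Obj C \<Longrightarrow> Z \<in> Obj C \<Longrightarrow> g \<in> Hom C Y Z \<Longrightarrow> a \<in> Hom C X Y \<Longrightarrow> b \<in> Hom C X Y \<Longrightarrow> le X Y a b \<Longrightarrow> le X Z (c X Y Z g a) (c X Y Z g b)"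
  unfolding hom_le_def by (metis comp_join_r)

end

locale kk = enr +
  fixes star
  assumes ks: "kk_star C join star"
begin

lemma star_hom[intro,simp]: "X \<in> Obj C \<Longrightarrow> f \<in> Hom C X X \<Longrightarrow> star X f \<in> Hom C X X"
  using ks unfolding kk_star_def by blast

lemma S1: "Y \<in> Obj C \<Longrightarrow> Z \<in> Obj C \<Longrightarrow> f \<in> Hom C Y Y \<Longrightarrow> g \<in> Hom C Y Z \<Longrightarrow>
  le Y Z (join Y Z g (c Y Y Z (c Y Y Z g (star Y f)) f)) (c Y Y Z g (star Y f)) \<and>
  (\<forall>x\<in>Hom C Y Z. le Y Z (join Y Z g (c Y Y Z x f)) x \<longrightarrow> le Y Z (c Y Y Z g (star Y f)) x)"
  using ks unfolding kk_star_def least_prefixpoint_def by blast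

lemma S2: "X \<in> Obj C \<Longrightarrow> Y \<in> Obj C \<Longrightarrow> f \<in> Hom C Y Y \<Longrightarrow> h \<in> Hom C X Y \<Longrightarrow>
  le X Y (join X Y h (c X Y Y f (c X Y Y (star Y f) h))) (c X Y Y (star Y f) h) \<and>
  (\<forall>x\<in>Hom C X Y. le X Y (join X Y h (c X Y Y f x)) x \<longrightarrow> le X Y (c X Y Y (star Y f) h) x)"
  using ks unfolding kk_star_def least_prefixpoint_def by blast

lemma unfold_r: assumes X: "X \<in> Obj C" and f: "f \<in> Hom C X X"
  shows "star X f = join X X (Id C X) (c X X X (star X f) f)"
proof -
  let ?p = "star X f" let ?F = "\<lambda>x. join X X (Id C X) (c X X X x f)"
  have s: "le X X (?F ?p) ?p" and l: "\<forall>x\<in>Hom C X X. le X X (?F x) x \<longrightarrow> le X X ?p x"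
    using S1[OF X X f id_hom[OF X]] X f by auto
  have "le X X (?F (?F ?p)) (?F ?p)"
    by (rule join_mono, (use X f s in auto), rule comp_mono_l) (use X f s in auto)
  hence "le X X ?p (?F ?p)" using l X f by auto
  thus ?thesis using s le_antisym X f by (meson comp_hom id_hom join_hom star_hom)
qed

lemma unfold_l: assumes X: "X \<in> Obj C" and f: "f \<in> Hom C X X"
  shows "star X f = join X X (Id C X) (c X X X f (star X f))"
proof -
  let ?p = "star X f" let ?F = "\<lambda>x. join X X (Id C X) (c X X X f x)"
  have s: "le X X (?F ?p) ?p" and l: "\<forall>x\<in>Hom C X X. le X X (?F x) x \<longrightarrow> le X X ?p x"
    using S2[OF X X f id_hom[OF X]] X f by auto
  have "le X X (?F (?F ?p)) (?F ?p)"
    by (rule join_mono, (use X f s in auto), rule comp_mono_r) (use X f s in auto)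
  hence "le X X ?p (?F ?p)" using l X f by auto
  thus ?thesis using s le_antisym X f by (meson comp_hom id_hom join_hom star_hom)
qed

lemma ax: "star_axioms C join star"
  unfolding star_axioms_def
proof (intro conjI ballI impI)
  fix X f assume "X \<in> Obj C" "f \<in> Hom C X X" thus "star X f \<in> Hom C X X" by simp
next
  fix X Y f g h k assume X: "X \<in> Obj C" and Y: "Y \<in> Obj C" and f: "f \<in> Hom C X X" and g: "g \<in> Hom C Y Y"
    and h: "h \<in> Hom C X X" and k: "k \<in> Hom C Y X"
  show "star X f = join X X (Id C X) (c X X X (star X f) f)" by (rule unfold_r[OF X f])
  show "star X (Id C X) = Id C X"
  proof -
    have a: "le X X (star X (Id C X)) (Id C X)"
      using S1[OF X X id_hom[OF X] id_hom[OF X]] X join_idem[OF X X id_hom[OF X]] le_refl[OF X X id_hom[OF X]] by auto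
    have "le X X (Id C X) (star X (Id C X))"
      using le_join1[OF X X id_hom[OF X], of "c X X X (star X (Id C X)) (Id C X)"] unfold_r[OF X id_hom[OF X]] X by auto
    thus ?thesis using a le_antisym X by (meson id_hom star_hom)
  qed
  show "star X f = star X (join X X f (Id C X))"
  proof -
    let ?u = "join X X f (Id C X)"
    have u: "?u \<in> Hom C X X" using X f by auto
    have e1: "join X X (Id C X) (c X X X (star X f) f) = star X f" using unfold_r[OF X f] by simp
    have "join X X (Id C X) (c X X X (star X f) ?u) = join X X (Id C X) (join X X (c X X X (star X f) f) (star X f))"
      using comp_join_r X f by simp
    also have "\<dots> = join X X (star X f) (star X f)" using e1 join_assoc X f by (metis comp_hom id_hom star_hom)
    also have "\<dots> = star X f" using join_idem X f by simp
    finally have "le X X (join X X (Id C X) (c X X X (star X f) ?u)) (star X f)" using le_refl X f by simp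
    hence a: "le X X (star X ?u) (star X f)" using S1[OF X X u id_hom[OF X]] X f by auto
    have e2: "join X X (Id C X) (c X X X (star X ?u) ?u) = star X ?u" using unfold_r[OF X u] by simp
    have e3: "c X X X (star X ?u) ?u = join X X (c X X X (star X ?u) f) (star X ?u)"
      using comp_join_r X f u by simp
    have "le X X (join X X (Id C X) (c X X X (star X ?u) f)) (join X X (Id C X) (c X X X (star X ?u) ?u))"
      by (rule join_mono) (use X f u e3 le_join1 in auto)
    hence "le X X (join X X (Id C X) (c X X X (star X ?u) f)) (star X ?u)" using e2 by simp
    hence b: "le X X (star X f) (star X ?u)" using S1[OF X X f id_hom[OF X]] X f u by auto
    show ?thesis using a b le_antisym X f u by (meson star_hom)
  qed
  assume hk: "c Y X X h k = c Y Y X k g"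
  let ?p = "c Y X X (star X h) k" and ?q = "c Y Y X k (star Y g)"
  have q: "join Y X k (c Y X X h ?q) = ?q"
  proof -
    have "c Y X X h ?q = c Y Y X (c Y X X h k) (star Y g)" using assoc[OF Y Y X X _ k h] Y g by auto
    also have "\<dots> = c Y Y X k (c Y Y Y g (star Y g))" using hk assoc[OF Y Y Y X _ g k] Y g by auto
    finally have "join Y X k (c Y X X h ?q) = join Y X (c Y Y X k (Id C Y)) (c Y Y X k (c Y Y Y g (star Y g)))"
      using Y X k by simp
    also have "\<dots> = c Y Y X k (join Y Y (Id C Y) (c Y Y Y g (star Y g)))" using comp_join_r Y X k g by simp
    also have "\<dots> = ?q" using unfold_l[OF Y g] by simp
    finally show ?thesis .
  qed
  have p: "join Y X k (c Y Y X ?p g) = ?p"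
  proof -
    have "c Y Y X ?p g = c Y X X (star X h) (c Y Y X k g)" using assoc[OF Y Y X X g k] X Y h by auto
    also have "\<dots> = c Y X X (c X X X (star X h) h) k" using hk assoc[OF Y X X X k h] X Y h by auto
    finally have "join Y X k (c Y Y X ?p g) = join Y X (c Y X X (Id C X) k) (c Y X X (c X X X (star X h) h) k)"
      using Y X k by simp
    also have "\<dots> = c Y X X (join X X (Id C X) (c X X X (star X h) h)) k" using comp_join_l Y X k h by simp
    also have "\<dots> = ?p" using unfold_r[OF X h] by simp
    finally show ?thesis .
  qed
  have a: "le Y X ?p ?q" using S2[OF Y X h k] q le_refl X Y g k by auto
  have b: "le Y X ?q ?p" using S1[OF Y X g k] p le_refl X Y h k by auto
  show "?p = ?q" using a b le_antisym X Y g h k by (meson comp_hom star_hom)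
qed

end

locale sa = enr +
  fixes star
  assumes sax: "star_axioms C join star"
begin

lemma star_hom'[intro,simp]: "X \<in> Obj C \<Longrightarrow> f \<in> Hom C X X \<Longrightarrow> star X f \<in> Hom C X X"
  using sax unfolding star_axioms_def by blast

lemma A1: "X \<in> Obj C \<Longrightarrow> f \<in> Hom C X X \<Longrightarrow> star X f = join X X (Id C X) (c X X X (star X f) f)"
  using sax unfolding star_axioms_def by blast
lemma A2: "X \<in> Obj C \<Longrightarrow> star X (Id C X) = Id C X"
  using sax id_hom unfolding star_axioms_def by blast
lemma A3: "X \<in> Obj C \<Longrightarrow> f \<in> Hom C X X \<Longrightarrow> star X f = star X (join X X f (Id C X))"
  using sax unfolding star_axioms_def by blast
lemma A4: "X \<in> Obj C \<Longrightarrow> Y \<in> Obj C \<Longrightarrow> g \<in> Hom C Y Y \<Longrightarrow> h \<in> Hom C X X \<Longrightarrow> k \<in> Hom C Y X \<Longrightarrow>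
  c Y X X h k = c Y Y X k g \<Longrightarrow> c Y X X (star X h) k = c Y Y X k (star Y g)"
  using sax unfolding star_axioms_def by blast

lemma comm: "X \<in> Obj C \<Longrightarrow> f \<in> Hom C X X \<Longrightarrow> c X X X (star X f) f = c X X X f (star X f)"
  using A4 by blast

lemma kks: "kk_star C join star"
  unfolding kk_star_def least_prefixpoint_def
proof (intro conjI ballI impI)
  fix X f assume "X \<in> Obj C" "f \<in> Hom C X X" thus "star X f \<in> Hom C X X" by simp
next
  fix Y Z f g assume Y: "Y \<in> Obj C" and Z: "Z \<in> Obj C" and f: "f \<in> Hom C Y Y" and g: "g \<in> Hom C Y Z"
  show "c Y Y Z g (star Y f) \<in> Hom C Y Z" using Y Z f g by simp
  have "join Y Z g (c Y Y Z (c Y Y Z g (star Y f)) f) = join Y Z (c Y Y Z g (Id C Y)) (c Y Y Z g (c Y Y Y (star Y f) f))"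
    using assoc[OF Y Y Y Z f _ g] Y Z f g by simp
  also have "\<dots> = c Y Y Z g (join Y Y (Id C Y) (c Y Y Y (star Y f) f))" using comp_join_r[OF Y Y Z] Y Z f g by simp
  also have "\<dots> = c Y Y Z g (star Y f)" using A1[OF Y f] by simp
  finally show "le Y Z (join Y Z g (c Y Y Z (c Y Y Z g (star Y f)) f)) (c Y Y Z g (star Y f))"
    using le_refl Y Z f g by simp
  fix x assume x: "x \<in> Hom C Y Z" and le: "le Y Z (join Y Z g (c Y Y Z x f)) x"
  have gx: "le Y Z g x" using le_trans[OF Y Z _ _ x le_join1 le] g x Y Z f by simp
  have xf: "le Y Z (c Y Y Z x f) x" using le_trans[OF Y Z _ _ x le_join2 le] g x Y Z f by simp
  have "c Y Y Z x (join Y Y f (Id C Y)) = join Y Z (c Y Y Z x f) x" using comp_join_r[OF Y Y Z] x f Y Z by simp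
  also have "\<dots> = c Y Z Z (Id C Z) x" using xf x Y Z unfolding hom_le_def by simp
  finally have "c Y Z Z (star Z (Id C Z)) x = c Y Y Z x (star Y (join Y Y f (Id C Y)))"
    using A4[OF Z Y _ id_hom[OF Z] x] f Y by simp
  hence e: "x = c Y Y Z x (star Y f)" using A2[OF Z] A3[OF Y f] x Y Z by simp
  show "le Y Z (c Y Y Z g (star Y f)) x"
  proof -
    have "le Y Z (c Y Y Z g (star Y f)) (c Y Y Z x (star Y f))" using comp_mono_l[OF Y Y Z _ g x gx] f Y by simp
    thus ?thesis using e by metis
  qed
next
  fix X Y f h assume X: "X \<in> Obj C" and Y: "Y \<in> Obj C" and f: "f \<in> Hom C Y Y" and h: "h \<in> Hom C X Y"
  show "c X Y Y (star Y f) h \<in> Hom C X Y" using X Y f h by simp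
  have "join X Y h (c X Y Y f (c X Y Y (star Y f) h)) = join X Y (c X Y Y (Id C Y) h) (c X Y Y (c Y Y Y f (star Y f)) h)"
    using assoc[OF X Y Y Y h _ f] X Y f h by simp
  also have "\<dots> = c X Y Y (join Y Y (Id C Y) (c Y Y Y (star Y f) f)) h" using comp_join_l[OF X Y Y] comm[OF Y f] X Y f h by simp
  also have "\<dots> = c X Y Y (star Y f) h" using A1[OF Y f] by simp
  finally show "le X Y (join X Y h (c X Y Y f (c X Y Y (star Y f) h))) (c X Y Y (star Y f) h)"
    using le_refl X Y f h by simp
  fix x assume x: "x \<in> Hom C X Y" and le: "le X Y (join X Y h (c X Y Y f x)) x"
  have hx: "le X Y h x" using le_trans[OF X Y _ _ x le_join1 le] h x X Y f by simp
  have fx: "le X Y (c X Y Y f x) x" using le_trans[OF X Y _ _ x le_join2 le] h x X Y f by simp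
  have "c X Y Y (join Y Y f (Id C Y)) x = join X Y (c X Y Y f x) x" using comp_join_l[OF X Y Y] x f X Y by simp
  also have "\<dots> = c X X Y x (Id C X)" using fx x X Y unfolding hom_le_def by simp
  finally have "c X Y Y (star Y (join Y Y f (Id C Y))) x = c X X Y x (star X (Id C X))"
    using A4[OF Y X id_hom[OF X] _ x] f Y by simp
  hence e: "x = c X Y Y (star Y f) x" using A2[OF X] A3[OF Y f] x X Y by simp
  show "le X Y (c X Y Y (star Y f) h) x"
  proof -
    have "le X Y (c X Y Y (star Y f) h) (c X Y Y (star Y f) x)" using comp_mono_r[OF X Y Y _ h x hx] f Y by simp
    thus ?thesis using e by metis
  qed
qed

end

theorem proposition2:
  fixes C :: "('o, 'm) category"
  assumes "category C"
  shows "kleene_kozen_category C \<longleftrightarrow>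
           (\<exists>join bt. enriched C join bt \<and> (\<exists>star. star_axioms C join star))"
proof
  assume "kleene_kozen_category C"
  then obtain join bt star where "enriched C join bt" "kk_star C join star"
    unfolding kleene_kozen_category_def by blast
  then interpret kk C join bt star using assms by unfold_locales
  show "\<exists>join bt. enriched C join bt \<and> (\<exists>star. star_axioms C join star)"
    using ax en by blast
next
  assume "\<exists>join bt. enriched C join bt \<and> (\<exists>star. star_axioms C join star)"
  then obtain join bt star where "enriched C join bt" "star_axioms C join star" by blast
  then interpret sa C join bt star using assms by unfold_locales
  show "kleene_kozen_category C"
    unfolding kleene_kozen_category_def using assms en kks by blast
qed

end
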